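(* Assume $r_t^l=r^l$ and $b_t^l=b^l$ for all $t\in\{1,\dots,T\}$ and $l\in\{1,\dots,L\}$. Given parameters $\gamma=\{\gamma_l\}_{l\le L}$, consider PB2: minimize $F(\rho)=\sum_{t=1}^T\sum_{l=1}^L\rho_t^l r^l b^l(\rho_t^l)$ s.t. $\sum_{t=1}^T\rho_t^l\ge\gamma_l$ for all $l$, $\rho_t^l\in[0,1]$; and PB5: minimize $\hat F(\hat\rho)=T\sum_{l=1}^L\hat\rho^l r^l b^l(\hat\rho^l)$ s.t. $T\hat\rho^l\ge\gamma_l$ for all $l$, $\hat\rho^l\in[0,1]$. If $\hat\rho^\ast=\{\hat\rho^l_\ast\}_{l\le L}$ is an optimal solution of PB5, then $\rho^\ast=\{\rho_t^{l\ast}\}$ with $\rho_t^{l\ast}=\hat\rho^l_\ast$ for all $t$ and $l$ is an optimal solution of PB2.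
   Context: $T,L$ positive integers; each $r^l$ is a positive integer and each $b^l:[0,1]\to[0,b^l_{\max}]$ is strictly increasing and convex. *)

theory Defs
  imports "HOL-Analysis.Analysis"
begin

definition F_PB2 :: "nat \<Rightarrow> nat \<Rightarrow> (nat \<Rightarrow> nat) \<Rightarrow> (nat \<Rightarrow> real \<Rightarrow> real)
    \<Rightarrow> (nat \<Rightarrow> nat \<Rightarrow> real) \<Rightarrow> real" where
  "F_PB2 T L r b rho = (\<Sum>t=1..T. \<Sum>l=1..L. rho t l * real (r l) * b l (rho t l))"

definition feasible_PB2 :: "nat \<Rightarrow> nat \<Rightarrow> (nat \<Rightarrow> real) \<Rightarrow> (nat \<Rightarrow> nat \<Rightarrow> real) \<Rightarrow> bool" where
  "feasible_PB2 T L \<gamma> rho \<longleftrightarrow>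
     (\<forall>l\<in>{1..L}. (\<Sum>t=1..T. rho t l) \<ge> \<gamma> l) \<and>
     (\<forall>t\<in>{1..T}. \<forall>l\<in>{1..L}. rho t l \<in> {0..1})"

definition optimal_PB2 :: "nat \<Rightarrow> nat \<Rightarrow> (nat \<Rightarrow> nat) \<Rightarrow> (nat \<Rightarrow> real \<Rightarrow> real)
    \<Rightarrow> (nat \<Rightarrow> real) \<Rightarrow> (nat \<Rightarrow> nat \<Rightarrow> real) \<Rightarrow> bool" where
  "optimal_PB2 T L r b \<gamma> rho \<longleftrightarrow> feasible_PB2 T L \<gamma> rho \<and>
     (\<forall>rho'. feasible_PB2 T L \<gamma> rho' \<longrightarrow> F_PB2 T L r b rho \<le> F_PB2 T L r b rho')"

definition F_PB5 :: "nat \<Rightarrow> nat \<Rightarrow> (nat \<Rightarrow> nat) \<Rightarrow> (nat \<Rightarrow> real \<Rightarrow> real)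
    \<Rightarrow> (nat \<Rightarrow> real) \<Rightarrow> real" where
  "F_PB5 T L r b rhoh = real T * (\<Sum>l=1..L. rhoh l * real (r l) * b l (rhoh l))"

definition feasible_PB5 :: "nat \<Rightarrow> nat \<Rightarrow> (nat \<Rightarrow> real) \<Rightarrow> (nat \<Rightarrow> real) \<Rightarrow> bool" where
  "feasible_PB5 T L \<gamma> rhoh \<longleftrightarrow>
     (\<forall>l\<in>{1..L}. real T * rhoh l \<ge> \<gamma> l \<and> rhoh l \<in> {0..1})"

definition optimal_PB5 :: "nat \<Rightarrow> nat \<Rightarrow> (nat \<Rightarrow> nat) \<Rightarrow> (nat \<Rightarrow> real \<Rightarrow> real)
    \<Rightarrow> (nat \<Rightarrow> real) \<Rightarrow> (nat \<Rightarrow> real) \<Rightarrow> bool" where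
  "optimal_PB5 T L r b \<gamma> rhoh \<longleftrightarrow> feasible_PB5 T L \<gamma> rhoh \<and>
     (\<forall>rhoh'. feasible_PB5 T L \<gamma> rhoh' \<longrightarrow> F_PB5 T L r b rhoh \<le> F_PB5 T L r b rhoh')"

end

theory Submission
  imports Defs
begin

lemma prod_convex:
  fixes g :: "real \<Rightarrow> real" and c :: real
  assumes c: "c \<ge> 0" and mono: "strict_mono_on {0..1} g" and cv: "convex_on {0..1} g"
  shows "convex_on {0..1} (\<lambda>x. x * c * g x)"
proof (rule convex_onI)
  show "convex {0..1::real}" by simp
  fix t x y :: real
  assume t: "0 < t" "t < 1" and x: "x \<in> {0..1}" and y: "y \<in> {0..1}"
  define z where "z = (1 - t) * x + t * y"
  have z0: "z \<ge> 0" using t x y by (auto simp: z_def)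
  have gz: "g z \<le> (1 - t) * g x + t * g y"
    using convex_onD[OF cv, of t x y] t x y by (simp add: z_def)
  have mxy: "(x - y) * (g x - g y) \<ge> 0"
  proof (cases "x \<le> y")
    case True
    then have "g x \<le> g y" using mono x y
      by (metis atLeastAtMost_iff order_le_less strict_mono_onD)
    then show ?thesis using True by (simp add: mult_nonpos_nonpos)
  next
    case False
    then have "g y \<le> g x" using mono x y
      by (metis atLeastAtMost_iff not_le order_le_less strict_mono_onD)
    then show ?thesis using False by simp
  qed
  have "z * g z \<le> z * ((1 - t) * g x + t * g y)" by (rule mult_left_mono[OF gz z0])
  also have "\<dots> = (1 - t) * (x * g x) + t * (y * g y) - t * (1 - t) * ((x - y) * (g x - g y))"
    by (simp add: z_def algebra_simps)
  also have "\<dots> \<le> (1 - t) * (x * g x) + t * (y * g y)"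
    using mxy t by simp
  finally have "z * g z \<le> (1 - t) * (x * g x) + t * (y * g y)" .
  then have "c * (z * g z) \<le> c * ((1 - t) * (x * g x) + t * (y * g y))"
    using c by (rule mult_left_mono)
  then show "((1 - t) *\<^sub>R x + t *\<^sub>R y) * c * g ((1 - t) *\<^sub>R x + t *\<^sub>R y)
      \<le> (1 - t) * (x * c * g x) + t * (y * c * g y)"
    by (simp add: z_def algebra_simps)
qed

theorem lemma6:
  fixes T L :: nat and r :: "nat \<Rightarrow> nat" and b :: "nat \<Rightarrow> real \<Rightarrow> real"
    and bmax :: "nat \<Rightarrow> real" and \<gamma> :: "nat \<Rightarrow> real" and rhoh :: "nat \<Rightarrow> real"
  assumes "T > 0" and "L > 0"
    and "\<forall>l\<in>{1..L}. r l > 0"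
    and "\<forall>l\<in>{1..L}. \<forall>x\<in>{0..1}. b l x \<in> {0..bmax l}"
    and "\<forall>l\<in>{1..L}. strict_mono_on {0..1} (b l)"
    and "\<forall>l\<in>{1..L}. convex_on {0..1} (b l)"
    and "optimal_PB5 T L r b \<gamma> rhoh"
  shows "optimal_PB2 T L r b \<gamma> (\<lambda>t l. rhoh l)"
proof -
  have f5: "feasible_PB5 T L \<gamma> rhoh" and opt5: "\<And>h. feasible_PB5 T L \<gamma> h \<Longrightarrow> F_PB5 T L r b rhoh \<le> F_PB5 T L r b h"
    using assms(7) by (auto simp: optimal_PB5_def)
  have Tpos: "real T > 0" using assms(1) by simp
  have feas: "feasible_PB2 T L \<gamma> (\<lambda>t l. rhoh l)"
    using f5 by (simp add: feasible_PB2_def feasible_PB5_def)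
  have Feq: "F_PB2 T L r b (\<lambda>t l. rhoh l) = F_PB5 T L r b rhoh"
    by (simp add: F_PB2_def F_PB5_def)
  have "F_PB2 T L r b (\<lambda>t l. rhoh l) \<le> F_PB2 T L r b rho" if fr: "feasible_PB2 T L \<gamma> rho" for rho
  proof -
    define h where "h l = (\<Sum>t=1..T. rho t l) / real T" for l
    have rng: "\<And>t l. t \<in> {1..T} \<Longrightarrow> l \<in> {1..L} \<Longrightarrow> rho t l \<in> {0..1}"
      using fr by (auto simp: feasible_PB2_def)
    have fh: "feasible_PB5 T L \<gamma> h"
      unfolding feasible_PB5_def
    proof
      fix l assume l: "l \<in> {1..L}"
      have s1: "(\<Sum>t=1..T. rho t l) \<ge> \<gamma> l" using fr l by (auto simp: feasible_PB2_def)
      have "(\<Sum>t=1..T. rho t l) \<le> (\<Sum>t=1..T. 1)" using rng l by (intro sum_mono) auto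
      then have le: "(\<Sum>t=1..T. rho t l) \<le> real T" by simp
      have ge: "(\<Sum>t=1..T. rho t l) \<ge> 0" using rng l by (intro sum_nonneg) auto
      show "real T * h l \<ge> \<gamma> l \<and> h l \<in> {0..1}"
        using s1 le ge Tpos by (auto simp: h_def field_simps)
    qed
    have key: "real T * (h l * real (r l) * b l (h l)) \<le> (\<Sum>t=1..T. rho t l * real (r l) * b l (rho t l))"
      if l: "l \<in> {1..L}" for l
    proof -
      have cv: "convex_on {0..1} (\<lambda>x. x * real (r l) * b l x)"
        using prod_convex assms(5,6) l by auto
      have "(\<lambda>x. x * real (r l) * b l x) (\<Sum>t\<in>{1..T}. (1 / real T) *\<^sub>R rho t l)
          \<le> (\<Sum>t\<in>{1..T}. (1 / real T) * (\<lambda>x. x * real (r l) * b l x) (rho t l))"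
        by (rule convex_on_sum[OF _ _ cv]) (use assms(1) Tpos rng l in auto)
      moreover have "(\<Sum>t\<in>{1..T}. (1 / real T) *\<^sub>R rho t l) = h l"
        by (simp add: h_def sum_divide_distrib)
      moreover have "(\<Sum>t\<in>{1..T}. (1 / real T) * (rho t l * real (r l) * b l (rho t l)))
          = (\<Sum>t=1..T. rho t l * real (r l) * b l (rho t l)) / real T"
        by (simp add: sum_divide_distrib)
      ultimately have "h l * real (r l) * b l (h l) \<le> (\<Sum>t=1..T. rho t l * real (r l) * b l (rho t l)) / real T"
        by simp
      then show ?thesis using Tpos by (simp add: field_simps)
    qed
    have "F_PB5 T L r b h \<le> F_PB2 T L r b rho"
      unfolding F_PB5_def F_PB2_def sum_distrib_left
      by (subst sum.swap) (rule sum_mono[OF key])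
    then show ?thesis using opt5[OF fh] Feq by simp
  qed
  then show ?thesis using feas by (simp add: optimal_PB2_def)
qed

end
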